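(* Let $S$ be an inverse semigroup and $\rho$ an idempotent separating congruence on $S$. Then there exist a group $G$ and an action of $T=S/\rho$ on $G$ by endomorphisms on the left such that the extension $(S,\rho)$ can be embedded into the $\lambda$-semidirect product extension $(G\rtimes_\lambda T,\vartheta_2)$, i.e. there is an injective homomorphism $\psi\colon S\to G\rtimes_\lambda T$ such that the congruence induced on $S$ by $\psi$ followed by the second projection $G\rtimes_\lambda T\to T$ is exactly $\rho$.
   Context: A congruence is idempotent separating if no two distinct idempotents are related. Let $K$ be a semigroup and $T$ an inverse semigroup; $T$ acts on $K$ if an antihomomorphism $t\mapsto\varepsilon_t$ from $T$ into the endomorphism monoid of $K$ is given (so $\varepsilon_u\varepsilon_t=\varepsilon_{tu}$); write ${}^t a$ for $a\varepsilon_t$. The $\lambda$-semidirect product $K\rtimes_\lambda T$ is the set $\{(a,t)\in K\times T: {}^{tt^{-1}}a=a\}$ with multiplication $(a,t)(b,u)=({}^{(tu)(tu)^{-1}}a\cdot {}^t b,\ tu)$, and $\vartheta_2$ is the congruence induced by the second projection $(a,t)\mapsto t$. *)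

theory Defs
  imports "HOL-Algebra.Group"
begin

text \<open>Semigroups are HOL-Algebra monoid records used only through carrier and mult
  (the unit field is ignored); associativity and closure are stated in sg_semigroup.\<close>

definition sg_semigroup :: "('a, 'b) monoid_scheme \<Rightarrow> bool" where
  "sg_semigroup S \<longleftrightarrow>
     (\<forall>x\<in>carrier S. \<forall>y\<in>carrier S. x \<otimes>\<^bsub>S\<^esub> y \<in> carrier S) \<and>
     (\<forall>x\<in>carrier S. \<forall>y\<in>carrier S. \<forall>z\<in>carrier S.
        (x \<otimes>\<^bsub>S\<^esub> y) \<otimes>\<^bsub>S\<^esub> z = x \<otimes>\<^bsub>S\<^esub> (y \<otimes>\<^bsub>S\<^esub> z))"

definition inverse_semigroup :: "('a, 'b) monoid_scheme \<Rightarrow> bool" where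
  "inverse_semigroup S \<longleftrightarrow> sg_semigroup S \<and>
     (\<forall>a\<in>carrier S. \<exists>!b. b \<in> carrier S \<and> a \<otimes>\<^bsub>S\<^esub> b \<otimes>\<^bsub>S\<^esub> a = a \<and> b \<otimes>\<^bsub>S\<^esub> a \<otimes>\<^bsub>S\<^esub> b = b)"

definition sg_inv :: "('a, 'b) monoid_scheme \<Rightarrow> 'a \<Rightarrow> 'a" where
  "sg_inv S a = (THE b. b \<in> carrier S \<and> a \<otimes>\<^bsub>S\<^esub> b \<otimes>\<^bsub>S\<^esub> a = a \<and> b \<otimes>\<^bsub>S\<^esub> a \<otimes>\<^bsub>S\<^esub> b = b)"

definition sg_congruence :: "('a, 'b) monoid_scheme \<Rightarrow> ('a \<times> 'a) set \<Rightarrow> bool" where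
  "sg_congruence S \<rho> \<longleftrightarrow> equiv (carrier S) \<rho> \<and>
     (\<forall>a b c. (a, b) \<in> \<rho> \<longrightarrow> c \<in> carrier S \<longrightarrow>
        (c \<otimes>\<^bsub>S\<^esub> a, c \<otimes>\<^bsub>S\<^esub> b) \<in> \<rho> \<and> (a \<otimes>\<^bsub>S\<^esub> c, b \<otimes>\<^bsub>S\<^esub> c) \<in> \<rho>)"

definition idempotents :: "('a, 'b) monoid_scheme \<Rightarrow> 'a set" where
  "idempotents S = {e \<in> carrier S. e \<otimes>\<^bsub>S\<^esub> e = e}"

definition idempotent_separating :: "('a, 'b) monoid_scheme \<Rightarrow> ('a \<times> 'a) set \<Rightarrow> bool" where
  "idempotent_separating S \<rho> \<longleftrightarrow>
     (\<forall>e\<in>idempotents S. \<forall>f\<in>idempotents S. (e, f) \<in> \<rho> \<longrightarrow> e = f)"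

definition sg_quot :: "('a, 'b) monoid_scheme \<Rightarrow> ('a \<times> 'a) set \<Rightarrow> 'a set monoid" where
  "sg_quot S \<rho> = \<lparr>carrier = carrier S // \<rho>,
     mult = (\<lambda>X Y. \<rho> `` {(SOME x. x \<in> X) \<otimes>\<^bsub>S\<^esub> (SOME y. y \<in> Y)}),
     one = undefined\<rparr>"

text \<open>Action of an inverse semigroup T on a group G by endomorphisms on the left:
  t maps to an endomorphism act t of G, with act t (act u a) = act (t u) a
  (i.e. t \<mapsto> \<epsilon>_t is an antihomomorphism when maps are written on the right).\<close>
definition acts_by_endos :: "('c, 'd) monoid_scheme \<Rightarrow> ('g, 'e) monoid_scheme \<Rightarrow> ('c \<Rightarrow> 'g \<Rightarrow> 'g) \<Rightarrow> bool" where
  "acts_by_endos T G act \<longleftrightarrow>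
     (\<forall>t\<in>carrier T. act t \<in> hom G G) \<and>
     (\<forall>t\<in>carrier T. \<forall>u\<in>carrier T. \<forall>a\<in>carrier G.
        act t (act u a) = act (t \<otimes>\<^bsub>T\<^esub> u) a)"

definition lambda_sdp :: "('g, 'e) monoid_scheme \<Rightarrow> ('c, 'd) monoid_scheme \<Rightarrow> ('c \<Rightarrow> 'g \<Rightarrow> 'g) \<Rightarrow> ('g \<times> 'c) monoid" where
  "lambda_sdp G T act = \<lparr>
     carrier = {(a, t). a \<in> carrier G \<and> t \<in> carrier T \<and> act (t \<otimes>\<^bsub>T\<^esub> sg_inv T t) a = a},
     mult = (\<lambda>(a, t) (b, u).
        (act ((t \<otimes>\<^bsub>T\<^esub> u) \<otimes>\<^bsub>T\<^esub> sg_inv T (t \<otimes>\<^bsub>T\<^esub> u)) a \<otimes>\<^bsub>G\<^esub> act t b, t \<otimes>\<^bsub>T\<^esub> u)),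
     one = undefined\<rparr>"

end

theory Submission
  imports Defs
begin



locale invsg =
  fixes S :: "('a, 'b) monoid_scheme" (structure)
  assumes isg: "inverse_semigroup S"
begin

abbreviation iv where "iv a \<equiv> sg_inv S a"

lemma cl[simp]: "x \<in> carrier S \<Longrightarrow> y \<in> carrier S \<Longrightarrow> x \<otimes> y \<in> carrier S"
  using isg unfolding inverse_semigroup_def sg_semigroup_def by blast

lemma as[simp]: "x \<in> carrier S \<Longrightarrow> y \<in> carrier S \<Longrightarrow> z \<in> carrier S \<Longrightarrow> (x \<otimes> y) \<otimes> z = x \<otimes> (y \<otimes> z)"
  using isg unfolding inverse_semigroup_def sg_semigroup_def by blast

lemma ex1: "a \<in> carrier S \<Longrightarrow> \<exists>!b. b \<in> carrier S \<and> a \<otimes> b \<otimes> a = a \<and> b \<otimes> a \<otimes> b = b"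
  using isg unfolding inverse_semigroup_def by blast

lemma iv_prop: "a \<in> carrier S \<Longrightarrow> iv a \<in> carrier S \<and> a \<otimes> iv a \<otimes> a = a \<and> iv a \<otimes> a \<otimes> iv a = iv a"
  unfolding sg_inv_def by (rule theI', erule ex1)

lemma iv_cl[simp]: "a \<in> carrier S \<Longrightarrow> iv a \<in> carrier S" using iv_prop by blast
lemma iv1[simp]: "a \<in> carrier S \<Longrightarrow> a \<otimes> (iv a \<otimes> a) = a" using iv_prop by fastforce
lemma iv2[simp]: "a \<in> carrier S \<Longrightarrow> iv a \<otimes> (a \<otimes> iv a) = iv a" using iv_prop by fastforce
lemma iv1'[simp]: "a \<in> carrier S \<Longrightarrow> x \<in> carrier S \<Longrightarrow> a \<otimes> (iv a \<otimes> (a \<otimes> x)) = a \<otimes> x"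
proof -
  assume a: "a \<in> carrier S" and x: "x \<in> carrier S"
  have "a \<otimes> (iv a \<otimes> (a \<otimes> x)) = (a \<otimes> (iv a \<otimes> a)) \<otimes> x" using a x by (simp del: iv1)
  thus ?thesis using a x by simp
qed
lemma iv2'[simp]: "a \<in> carrier S \<Longrightarrow> x \<in> carrier S \<Longrightarrow> iv a \<otimes> (a \<otimes> (iv a \<otimes> x)) = iv a \<otimes> x"
proof -
  assume a: "a \<in> carrier S" and x: "x \<in> carrier S"
  have "iv a \<otimes> (a \<otimes> (iv a \<otimes> x)) = (iv a \<otimes> (a \<otimes> iv a)) \<otimes> x" using a x by (simp del: iv2)
  thus ?thesis using a x by simp
qed

lemma iv_uniq: "a \<in> carrier S \<Longrightarrow> b \<in> carrier S \<Longrightarrow> a \<otimes> b \<otimes> a = a \<Longrightarrow> b \<otimes> a \<otimes> b = b \<Longrightarrow> b = iv a"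
  using ex1[of a] iv_prop[of a] by blast

lemma iv_iv[simp]: "a \<in> carrier S \<Longrightarrow> iv (iv a) = a"
  by (rule sym, rule iv_uniq) auto

lemma idem_iv: "e \<in> carrier S \<Longrightarrow> e \<otimes> e = e \<Longrightarrow> iv e = e"
  by (metis iv_uniq)

lemma idem_prod:
  assumes e: "e \<in> carrier S" "e \<otimes> e = e" and f: "f \<in> carrier S" "f \<otimes> f = f"
  shows "(e \<otimes> f) \<otimes> (e \<otimes> f) = e \<otimes> f"
proof -
  define a where "a = e \<otimes> f"
  define b where "b = iv a"
  have a: "a \<in> carrier S" and b: "b \<in> carrier S" using e f by (auto simp: a_def b_def)
  have ee: "e \<otimes> (e \<otimes> x) = e \<otimes> x" if "x \<in> carrier S" for x using e that as[of e e x] by simp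
  have ff: "f \<otimes> (f \<otimes> x) = f \<otimes> x" if "x \<in> carrier S" for x using f that as[of f f x] by simp
  define c where "c = f \<otimes> (b \<otimes> e)"
  have c: "c \<in> carrier S" using b e f by (simp add: c_def)
  have aba: "a \<otimes> (b \<otimes> a) = a" and bab: "b \<otimes> (a \<otimes> b) = b" using a by (auto simp: b_def)
  have bab': "b \<otimes> (e \<otimes> (f \<otimes> (b \<otimes> x))) = b \<otimes> x" if "x \<in> carrier S" for x
  proof -
    have "(b \<otimes> (a \<otimes> b)) \<otimes> x = b \<otimes> x" using bab by simp
    thus ?thesis using that e f b by (simp add: a_def)
  qed
  have aba': "e \<otimes> (f \<otimes> (b \<otimes> (e \<otimes> (f \<otimes> x)))) = e \<otimes> (f \<otimes> x)" if "x \<in> carrier S" for x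
  proof -
    have "(a \<otimes> (b \<otimes> a)) \<otimes> x = a \<otimes> x" using aba by simp
    thus ?thesis using that e f b by (simp add: a_def)
  qed
  have "a \<otimes> c \<otimes> a = a"
    using e f b ee ff aba aba'[of f] by (simp add: c_def a_def)
  moreover have "c \<otimes> a \<otimes> c = c"
    using e f b ee ff bab' by (simp add: c_def a_def)
  ultimately have cb: "c = b" using iv_uniq[OF a c] by (simp add: b_def)
  have "b \<otimes> b = b"
  proof -
    have "b \<otimes> b = c \<otimes> c" by (simp add: cb)
    also have "\<dots> = f \<otimes> ((b \<otimes> (e \<otimes> f) \<otimes> b) \<otimes> e)" using e f b ee ff by (simp add: c_def)
    also have "\<dots> = c" using bab e f b by (simp add: a_def c_def)
    finally show ?thesis using cb by simp
  qed
  hence "iv b = b" using idem_iv b by blast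
  moreover have "iv b = a" using a by (simp add: b_def)
  ultimately have "a = b" by simp
  with \<open>b \<otimes> b = b\<close> show ?thesis by (simp add: a_def)
qed

lemma idem_comm:
  assumes e: "e \<in> carrier S" "e \<otimes> e = e" and f: "f \<in> carrier S" "f \<otimes> f = f"
  shows "e \<otimes> f = f \<otimes> e"
proof -
  have ef: "(e \<otimes> f) \<otimes> (e \<otimes> f) = e \<otimes> f" and fe: "(f \<otimes> e) \<otimes> (f \<otimes> e) = f \<otimes> e"
    using idem_prod e f by auto
  have ee: "e \<otimes> (e \<otimes> x) = e \<otimes> x" if "x \<in> carrier S" for x using e that as[of e e x] by simp
  have ff: "f \<otimes> (f \<otimes> x) = f \<otimes> x" if "x \<in> carrier S" for x using f that as[of f f x] by simp
  have ef': "e \<otimes> (f \<otimes> (e \<otimes> (f \<otimes> x))) = e \<otimes> (f \<otimes> x)" if "x \<in> carrier S" for x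
  proof -
    have "((e \<otimes> f) \<otimes> (e \<otimes> f)) \<otimes> x = (e \<otimes> f) \<otimes> x" using ef by simp
    thus ?thesis using that e f by simp
  qed
  have fe': "f \<otimes> (e \<otimes> (f \<otimes> (e \<otimes> x))) = f \<otimes> (e \<otimes> x)" if "x \<in> carrier S" for x
  proof -
    have "((f \<otimes> e) \<otimes> (f \<otimes> e)) \<otimes> x = (f \<otimes> e) \<otimes> x" using fe by simp
    thus ?thesis using that e f by simp
  qed
  have g1: "e \<otimes> f \<otimes> (f \<otimes> e) \<otimes> (e \<otimes> f) = e \<otimes> f"
    using e f ff[of e] ee[of f] ef'[of f] by simp
  have g2: "f \<otimes> e \<otimes> (e \<otimes> f) \<otimes> (f \<otimes> e) = f \<otimes> e"
    using e f ee[of f] ff[of e] fe'[of e] by simp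
  have "f \<otimes> e = iv (e \<otimes> f)"
    by (rule iv_uniq) (use e f g1 g2 in auto)
  moreover have "e \<otimes> f = iv (e \<otimes> f)"
    by (rule iv_uniq) (use e f ef in auto)
  ultimately show ?thesis by simp
qed

lemma idem_l[simp]: "a \<in> carrier S \<Longrightarrow> (a \<otimes> iv a) \<otimes> (a \<otimes> iv a) = a \<otimes> iv a" by simp
lemma idem_r[simp]: "a \<in> carrier S \<Longrightarrow> (iv a \<otimes> a) \<otimes> (iv a \<otimes> a) = iv a \<otimes> a" by simp

lemma iv_mult: assumes a: "a \<in> carrier S" and b: "b \<in> carrier S"
  shows "iv (a \<otimes> b) = iv b \<otimes> iv a"
proof -
  have c: "(b \<otimes> iv b) \<otimes> (iv a \<otimes> a) = (iv a \<otimes> a) \<otimes> (b \<otimes> iv b)"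
    using idem_comm[of "b \<otimes> iv b" "iv a \<otimes> a"] a b by simp
  have c1: "b \<otimes> (iv b \<otimes> (iv a \<otimes> (a \<otimes> x))) = iv a \<otimes> (a \<otimes> (b \<otimes> (iv b \<otimes> x)))" if "x \<in> carrier S" for x
  proof -
    have "((b \<otimes> iv b) \<otimes> (iv a \<otimes> a)) \<otimes> x = ((iv a \<otimes> a) \<otimes> (b \<otimes> iv b)) \<otimes> x" using c by simp
    thus ?thesis using that a b by simp
  qed
  have g1: "a \<otimes> b \<otimes> (iv b \<otimes> iv a) \<otimes> (a \<otimes> b) = a \<otimes> b"
    using a b c1[of b] by simp
  have g2: "iv b \<otimes> iv a \<otimes> (a \<otimes> b) \<otimes> (iv b \<otimes> iv a) = iv b \<otimes> iv a"
    using a b c1[of "iv a", symmetric] by simp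
  show ?thesis
    by (rule sym, rule iv_uniq) (use a b g1 g2 in auto)
qed

end



locale isc = invsg +
  fixes \<rho> :: "('a \<times> 'a) set"
  assumes cong: "sg_congruence S \<rho>" and sep: "idempotent_separating S \<rho>"
begin

definition req (infix "\<sim>" 50) where "a \<sim> b \<longleftrightarrow> (a, b) \<in> \<rho>"

lemma eqv: "equiv (carrier S) \<rho>" using cong unfolding sg_congruence_def by blast

lemma rsub: "a \<sim> b \<Longrightarrow> a \<in> carrier S \<and> b \<in> carrier S"
  using eqv unfolding req_def equiv_def refl_on_def by blast
lemma rrefl[simp]: "a \<in> carrier S \<Longrightarrow> a \<sim> a"
  using eqv unfolding req_def equiv_def refl_on_def by blast
lemma rsym: "a \<sim> b \<Longrightarrow> b \<sim> a"
  using eqv unfolding req_def equiv_def sym_def by blast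
lemma rtrans[trans]: "a \<sim> b \<Longrightarrow> b \<sim> c \<Longrightarrow> a \<sim> c"
  using eqv unfolding req_def equiv_def trans_def by blast
lemma cml: "a \<sim> b \<Longrightarrow> c \<in> carrier S \<Longrightarrow> c \<otimes> a \<sim> c \<otimes> b"
  using cong unfolding sg_congruence_def req_def by blast
lemma cmr: "a \<sim> b \<Longrightarrow> c \<in> carrier S \<Longrightarrow> a \<otimes> c \<sim> b \<otimes> c"
  using cong unfolding sg_congruence_def req_def by blast
lemma cm2: "a \<sim> b \<Longrightarrow> c \<sim> d \<Longrightarrow> a \<otimes> c \<sim> b \<otimes> d"
  by (meson cml cmr rsub rtrans)

lemma sepI: "e \<in> carrier S \<Longrightarrow> e \<otimes> e = e \<Longrightarrow> f \<in> carrier S \<Longrightarrow> f \<otimes> f = f \<Longrightarrow> e \<sim> f \<Longrightarrow> e = f"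
  using sep unfolding idempotent_separating_def idempotents_def req_def by blast

lemma lall: assumes x: "x \<in> carrier S" and xx: "x \<otimes> x \<sim> x"
  shows "\<exists>e. e \<in> carrier S \<and> e \<otimes> e = e \<and> x \<sim> e"
proof -
  define e where "e = x \<otimes> (iv (x \<otimes> x) \<otimes> x)"
  have ec: "e \<in> carrier S" using x by (simp add: e_def)
  have "e \<otimes> e = e" using x iv2'[of "x \<otimes> x" x] by (simp add: e_def)
  moreover have "e \<sim> x"
  proof -
    have "e \<sim> (x \<otimes> x) \<otimes> (iv (x \<otimes> x) \<otimes> (x \<otimes> x))"
      unfolding e_def by (rule cm2[OF rsym[OF xx] cm2[OF rrefl rsym[OF xx]]]) (use x in auto)
    also have "(x \<otimes> x) \<otimes> (iv (x \<otimes> x) \<otimes> (x \<otimes> x)) = x \<otimes> x" using x by (simp only: iv1 cl)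
    finally show ?thesis using xx rtrans by blast
  qed
  ultimately show ?thesis using ec rsym by blast
qed

lemma qcomm: assumes g: "g \<otimes> g \<sim> g" and h: "h \<otimes> h \<sim> h"
  shows "g \<otimes> h \<sim> h \<otimes> g"
proof -
  have gc: "g \<in> carrier S" and hc: "h \<in> carrier S" using g h rsub by auto
  obtain e where e: "e \<in> carrier S" "e \<otimes> e = e" "g \<sim> e" using lall gc g by blast
  obtain f where f: "f \<in> carrier S" "f \<otimes> f = f" "h \<sim> f" using lall hc h by blast
  have "g \<otimes> h \<sim> e \<otimes> f" using cm2 e f by blast
  also have "e \<otimes> f = f \<otimes> e" using idem_comm e f by blast
  also have "f \<otimes> e \<sim> h \<otimes> g" using cm2 e f rsym by blast
  finally show ?thesis .
qed

lemma inv_rho: assumes a: "a \<in> carrier S" and y: "y \<in> carrier S"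
  and aya: "a \<otimes> y \<otimes> a \<sim> a" and yay: "y \<otimes> a \<otimes> y \<sim> y"
  shows "y \<sim> iv a"
proof -
  define z where "z = iv a"
  have z: "z \<in> carrier S" using a by (simp add: z_def)
  have yay': "y \<otimes> (a \<otimes> y) \<sim> y" and aya': "a \<otimes> (y \<otimes> a) \<sim> a" using yay aya a y by auto
  have ya: "(y \<otimes> a) \<otimes> (y \<otimes> a) \<sim> y \<otimes> a"
  proof -
    have "(y \<otimes> a) \<otimes> (y \<otimes> a) = (y \<otimes> (a \<otimes> y)) \<otimes> a" using a y by simp
    also have "\<dots> \<sim> y \<otimes> a" using cmr[OF yay' a] .
    finally show ?thesis .
  qed
  have ay: "(a \<otimes> y) \<otimes> (a \<otimes> y) \<sim> a \<otimes> y"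
  proof -
    have "(a \<otimes> y) \<otimes> (a \<otimes> y) = (a \<otimes> (y \<otimes> a)) \<otimes> y" using a y by simp
    also have "\<dots> \<sim> a \<otimes> y" using cmr[OF aya' y] .
    finally show ?thesis .
  qed
  have za: "(z \<otimes> a) \<otimes> (z \<otimes> a) \<sim> z \<otimes> a" using a z by (simp add: z_def)
  have az: "(a \<otimes> z) \<otimes> (a \<otimes> z) \<sim> a \<otimes> z" using a z by (simp add: z_def)
  have "y \<sim> y \<otimes> (a \<otimes> y)" using rsym[OF yay'] .
  also have "y \<otimes> (a \<otimes> y) = ((y \<otimes> a) \<otimes> (z \<otimes> a)) \<otimes> y" using a y z by (simp add: z_def)
  also have "\<dots> \<sim> ((z \<otimes> a) \<otimes> (y \<otimes> a)) \<otimes> y" using cmr[OF qcomm[OF ya za] y] .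
  also have "((z \<otimes> a) \<otimes> (y \<otimes> a)) \<otimes> y = (z \<otimes> a) \<otimes> (y \<otimes> (a \<otimes> y))" using a y z by simp
  also have "\<dots> \<sim> (z \<otimes> a) \<otimes> y" using cml[OF yay'] a z by simp
  also have "(z \<otimes> a) \<otimes> y = z \<otimes> ((a \<otimes> z) \<otimes> (a \<otimes> y))" using a y z by (simp add: z_def)
  also have "\<dots> \<sim> z \<otimes> ((a \<otimes> y) \<otimes> (a \<otimes> z))" using cml[OF qcomm[OF az ay] z] .
  also have "z \<otimes> ((a \<otimes> y) \<otimes> (a \<otimes> z)) = z \<otimes> ((a \<otimes> (y \<otimes> a)) \<otimes> z)" using a y z by simp
  also have "\<dots> \<sim> z \<otimes> (a \<otimes> z)" using cml[OF cmr[OF aya' z] z] .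
  also have "z \<otimes> (a \<otimes> z) = z" using a by (simp add: z_def)
  finally show ?thesis by (simp add: z_def)
qed

lemma iv_cong: assumes ab: "a \<sim> b" shows "iv a \<sim> iv b"
proof -
  have a: "a \<in> carrier S" and b: "b \<in> carrier S" using ab rsub by auto
  have "a \<otimes> iv b \<otimes> a \<sim> b \<otimes> iv b \<otimes> b" using cm2[OF cm2[OF ab rrefl[of "iv b"]] ab] b by simp
  hence "a \<otimes> iv b \<otimes> a \<sim> b" using b by simp
  hence 1: "a \<otimes> iv b \<otimes> a \<sim> a" using ab rsym rtrans by blast
  have "iv b \<otimes> a \<otimes> iv b \<sim> iv b \<otimes> b \<otimes> iv b" using cm2[OF cm2[OF rrefl[of "iv b"] ab] rrefl[of "iv b"]] b by simp
  hence 2: "iv b \<otimes> a \<otimes> iv b \<sim> iv b" using b by simp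
  show ?thesis using inv_rho[OF a _ 1 2] b rsym by simp
qed

lemma rho_idem: assumes ab: "a \<sim> b"
  shows "a \<otimes> iv a = b \<otimes> iv b" "iv a \<otimes> a = iv b \<otimes> b"
proof -
  have a: "a \<in> carrier S" and b: "b \<in> carrier S" using ab rsub by auto
  show "a \<otimes> iv a = b \<otimes> iv b"
    by (rule sepI) (use a b cm2[OF ab iv_cong[OF ab]] in auto)
  show "iv a \<otimes> a = iv b \<otimes> b"
    by (rule sepI) (use a b cm2[OF iv_cong[OF ab] ab] in auto)
qed

lemma idem_cls: assumes ne: "n \<sim> e" and e: "e \<otimes> e = e"
  shows "n \<otimes> iv n = e" "iv n \<otimes> n = e" "n \<otimes> e = n" "e \<otimes> n = n"
proof -
  have n: "n \<in> carrier S" and ec: "e \<in> carrier S" using ne rsub by auto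
  have ie: "iv e = e" using idem_iv ec e by blast
  show 1: "n \<otimes> iv n = e" using rho_idem(1)[OF ne] ie e by simp
  show 2: "iv n \<otimes> n = e" using rho_idem(2)[OF ne] ie e by simp
  show "n \<otimes> e = n" using n by (simp flip: 2)
  show "e \<otimes> n = n" using n iv1'[of n "iv n"] by (simp flip: 1 del: iv1')
qed

end



context isc begin

abbreviation T where "T \<equiv> sg_quot S \<rho>"
definition cls where "cls a = \<rho> `` {a}"
definition rep :: "'a set \<Rightarrow> 'a" where "rep X = (SOME a. a \<in> X)"

lemma carT: "carrier T = carrier S // \<rho>" by (simp add: sg_quot_def)
lemma multT_def: "X \<otimes>\<^bsub>T\<^esub> Y = cls (rep X \<otimes> rep Y)" by (simp add: sg_quot_def cls_def rep_def)

lemma cls_eq: "a \<in> carrier S \<Longrightarrow> b \<in> carrier S \<Longrightarrow> cls a = cls b \<longleftrightarrow> a \<sim> b"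
  unfolding cls_def req_def using eq_equiv_class_iff[OF eqv] by blast
lemma mem_cls: "b \<in> cls a \<longleftrightarrow> a \<sim> b" unfolding cls_def req_def by blast
lemma cls_T[simp]: "a \<in> carrier S \<Longrightarrow> cls a \<in> carrier T"
  unfolding carT cls_def by (rule quotientI)
lemma T_cases: "X \<in> carrier T \<Longrightarrow> \<exists>a\<in>carrier S. X = cls a"
  unfolding carT cls_def by (blast elim: quotientE)

lemma rep_cls: "a \<in> carrier S \<Longrightarrow> rep (cls a) \<sim> a"
proof -
  assume a: "a \<in> carrier S"
  have "a \<in> cls a" using a mem_cls by simp
  hence "rep (cls a) \<in> cls a" unfolding rep_def by (rule someI)
  thus ?thesis using mem_cls rsym by blast
qed
lemma rep_c[simp]: "X \<in> carrier T \<Longrightarrow> rep X \<in> carrier S"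
  using T_cases rep_cls rsub by blast
lemma cls_rep[simp]: "X \<in> carrier T \<Longrightarrow> cls (rep X) = X"
proof -
  assume X: "X \<in> carrier T"
  then obtain a where a: "a \<in> carrier S" "X = cls a" using T_cases by blast
  have "rep X \<sim> a" using rep_cls a by simp
  thus ?thesis using cls_eq a X by simp
qed

lemma multT[simp]: "a \<in> carrier S \<Longrightarrow> b \<in> carrier S \<Longrightarrow> cls a \<otimes>\<^bsub>T\<^esub> cls b = cls (a \<otimes> b)"
proof -
  assume a: "a \<in> carrier S" and b: "b \<in> carrier S"
  have "rep (cls a) \<otimes> rep (cls b) \<sim> a \<otimes> b" using cm2[OF rep_cls[OF a] rep_cls[OF b]] .
  thus ?thesis unfolding multT_def using cls_eq a b rsub by blast
qed
lemma multT_c[simp]: "X \<in> carrier T \<Longrightarrow> Y \<in> carrier T \<Longrightarrow> X \<otimes>\<^bsub>T\<^esub> Y \<in> carrier T"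
  unfolding multT_def by simp
lemma assocT: "X \<in> carrier T \<Longrightarrow> Y \<in> carrier T \<Longrightarrow> Z \<in> carrier T \<Longrightarrow>
   (X \<otimes>\<^bsub>T\<^esub> Y) \<otimes>\<^bsub>T\<^esub> Z = X \<otimes>\<^bsub>T\<^esub> (Y \<otimes>\<^bsub>T\<^esub> Z)"
proof -
  assume X: "X \<in> carrier T" and Y: "Y \<in> carrier T" and Z: "Z \<in> carrier T"
  obtain x y z where "x \<in> carrier S" "y \<in> carrier S" "z \<in> carrier S" "X = cls x" "Y = cls y" "Z = cls z"
    using T_cases X Y Z by meson
  thus ?thesis by simp
qed

lemma ivT[simp]: assumes a: "a \<in> carrier S" shows "sg_inv T (cls a) = cls (iv a)"
  unfolding sg_inv_def[of T]
proof (rule the_equality)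
  show "cls (iv a) \<in> carrier T \<and> cls a \<otimes>\<^bsub>T\<^esub> cls (iv a) \<otimes>\<^bsub>T\<^esub> cls a = cls a \<and>
    cls (iv a) \<otimes>\<^bsub>T\<^esub> cls a \<otimes>\<^bsub>T\<^esub> cls (iv a) = cls (iv a)" using a by simp
next
  fix Y assume Y: "Y \<in> carrier T \<and> cls a \<otimes>\<^bsub>T\<^esub> Y \<otimes>\<^bsub>T\<^esub> cls a = cls a \<and> Y \<otimes>\<^bsub>T\<^esub> cls a \<otimes>\<^bsub>T\<^esub> Y = Y"
  then obtain y where y: "y \<in> carrier S" "Y = cls y" using T_cases by blast
  have "cls (a \<otimes> y \<otimes> a) = cls a" using Y y a by simp
  hence 1: "a \<otimes> y \<otimes> a \<sim> a" using y a cls_eq by simp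
  have "cls (y \<otimes> a \<otimes> y) = cls y" using Y y a by simp
  hence 2: "y \<otimes> a \<otimes> y \<sim> y" using y a cls_eq by simp
  show "Y = cls (iv a)" using inv_rho[OF a y(1) 1 2] y a cls_eq by simp
qed

definition Dc where "Dc a s \<longleftrightarrow> a \<otimes> (s \<otimes> iv s) = a"

lemma Dc_rho: assumes a: "a \<in> carrier S" and s: "s \<in> carrier S" and h: "a \<otimes> (s \<otimes> iv s) \<sim> a"
  shows "Dc a s"
proof -
  have h2: "iv a \<otimes> (a \<otimes> (s \<otimes> iv s)) \<sim> iv a \<otimes> a" using cml[OF h] a by simp
  have e: "(iv a \<otimes> a) \<otimes> (s \<otimes> iv s) = iv a \<otimes> a"
    by (rule sepI) (use a s idem_prod[of "iv a \<otimes> a" "s \<otimes> iv s"] h2 in auto)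
  have "a \<otimes> (s \<otimes> iv s) = a \<otimes> ((iv a \<otimes> a) \<otimes> (s \<otimes> iv s))" using a s by simp
  also have "\<dots> = a" using e a by simp
  finally show ?thesis by (simp add: Dc_def)
qed

lemma Dc_resp: assumes aa: "a \<sim> a2" and ss: "s \<sim> s2" and D: "Dc a s" shows "Dc a2 s2"
proof -
  have c: "a \<in> carrier S" "a2 \<in> carrier S" "s \<in> carrier S" "s2 \<in> carrier S" using aa ss rsub by auto
  have "a2 \<otimes> (s2 \<otimes> iv s2) \<sim> a \<otimes> (s \<otimes> iv s)" using cm2[OF rsym[OF aa] cm2[OF rsym[OF ss] iv_cong[OF rsym[OF ss]]]] .
  also have "\<dots> = a" using D by (simp add: Dc_def)
  also have "a \<sim> a2" by fact
  finally show ?thesis using Dc_rho c by blast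
qed

lemma Dc_comp: assumes a: "a \<in> carrier S" and s: "s \<in> carrier S" and v: "v \<in> carrier S"
  shows "(Dc a s \<and> Dc (a \<otimes> s) v) \<longleftrightarrow> Dc a (s \<otimes> v)"
proof -
  have com: "(v \<otimes> iv v) \<otimes> (iv s \<otimes> s) = (iv s \<otimes> s) \<otimes> (v \<otimes> iv v)"
    using idem_comm[of "v \<otimes> iv v" "iv s \<otimes> s"] s v by simp
  have com': "x \<otimes> (v \<otimes> (iv v \<otimes> (iv s \<otimes> s))) = x \<otimes> (iv s \<otimes> (s \<otimes> (v \<otimes> iv v)))" if "x \<in> carrier S" for x
  proof -
    have "x \<otimes> ((v \<otimes> iv v) \<otimes> (iv s \<otimes> s)) = x \<otimes> ((iv s \<otimes> s) \<otimes> (v \<otimes> iv v))" using com by simp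
    thus ?thesis using that s v by simp
  qed
  have eq: "Dc a (s \<otimes> v) \<longleftrightarrow> a \<otimes> (s \<otimes> (v \<otimes> (iv v \<otimes> iv s))) = a"
    unfolding Dc_def using s v a by (simp add: iv_mult)
  show ?thesis
  proof
    assume h: "Dc a s \<and> Dc (a \<otimes> s) v"
    have "a \<otimes> (s \<otimes> (v \<otimes> (iv v \<otimes> iv s))) = (a \<otimes> s \<otimes> (v \<otimes> iv v)) \<otimes> iv s" using a s v by simp
    also have "\<dots> = a" using h a s v by (simp add: Dc_def)
    finally show "Dc a (s \<otimes> v)" using eq by simp
  next
    assume h: "Dc a (s \<otimes> v)"
    hence h': "a \<otimes> (s \<otimes> (v \<otimes> (iv v \<otimes> iv s))) = a" using eq by simp
    have 1: "a \<otimes> (s \<otimes> iv s) = a"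
    proof -
      have "a \<otimes> (s \<otimes> iv s) = (a \<otimes> (s \<otimes> (v \<otimes> (iv v \<otimes> iv s)))) \<otimes> (s \<otimes> iv s)" using h' by simp
      also have "\<dots> = a \<otimes> (s \<otimes> (v \<otimes> (iv v \<otimes> (iv s \<otimes> (s \<otimes> iv s)))))" using a s v by simp
      also have "\<dots> = a" using a s v h' by simp
      finally show ?thesis .
    qed
    have 2: "a \<otimes> (s \<otimes> (v \<otimes> iv v)) = a \<otimes> s"
    proof -
      have "a \<otimes> s = (a \<otimes> (s \<otimes> (v \<otimes> (iv v \<otimes> iv s)))) \<otimes> s" using h' by simp
      also have "\<dots> = (a \<otimes> s) \<otimes> (v \<otimes> (iv v \<otimes> (iv s \<otimes> s)))" using a s v by simp
      also have "\<dots> = (a \<otimes> s) \<otimes> (iv s \<otimes> (s \<otimes> (v \<otimes> iv v)))" using com' a s by simp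
      also have "\<dots> = a \<otimes> (s \<otimes> (v \<otimes> iv v))" using a s v by simp
      finally show ?thesis by simp
    qed
    show "Dc a s \<and> Dc (a \<otimes> s) v" using 1 2 a s v by (simp add: Dc_def)
  qed
qed

end



context isc begin

definition ex :: "'a set \<Rightarrow> 'a" where "ex x = rep x \<otimes> iv (rep x)"
definition D where "D x t \<longleftrightarrow> Dc (rep x) (rep t)"

lemma ex_c[simp]: "x \<in> carrier T \<Longrightarrow> ex x \<in> carrier S" by (simp add: ex_def)
lemma ex_idem[simp]: "x \<in> carrier T \<Longrightarrow> ex x \<otimes> ex x = ex x" by (simp add: ex_def)
lemma ex_cls: "a \<in> carrier S \<Longrightarrow> ex (cls a) = a \<otimes> iv a"
  unfolding ex_def using rho_idem(1)[OF rep_cls] by blast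

lemma D_cls: "a \<in> carrier S \<Longrightarrow> s \<in> carrier S \<Longrightarrow> D (cls a) (cls s) \<longleftrightarrow> Dc a s"
  unfolding D_def using Dc_resp rep_cls rsym by blast

lemma ex_mult: assumes x: "x \<in> carrier T" and t: "t \<in> carrier T" and d: "D x t"
  shows "ex (x \<otimes>\<^bsub>T\<^esub> t) = ex x"
proof -
  obtain a s where as: "a \<in> carrier S" "s \<in> carrier S" "x = cls a" "t = cls s" using x t T_cases by meson
  have dc: "a \<otimes> (s \<otimes> iv s) = a" using d as D_cls by (simp add: Dc_def)
  have "ex (x \<otimes>\<^bsub>T\<^esub> t) = (a \<otimes> s) \<otimes> iv (a \<otimes> s)" using as ex_cls by simp
  also have "\<dots> = (a \<otimes> (s \<otimes> iv s)) \<otimes> iv a" using as by (simp add: iv_mult)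
  also have "\<dots> = ex x" using dc as ex_cls by simp
  finally show ?thesis .
qed

lemma D_comp: assumes x: "x \<in> carrier T" and t: "t \<in> carrier T" and u: "u \<in> carrier T"
  shows "(D x t \<and> D (x \<otimes>\<^bsub>T\<^esub> t) u) \<longleftrightarrow> D x (t \<otimes>\<^bsub>T\<^esub> u)"
proof -
  obtain a s v where as: "a \<in> carrier S" "s \<in> carrier S" "v \<in> carrier S" "x = cls a" "t = cls s" "u = cls v"
    using x t u T_cases by meson
  show ?thesis using as Dc_comp[of a s v] D_cls by simp
qed

lemma D_idem: assumes x: "x \<in> carrier T" and t: "t \<in> carrier T"
  shows "D x (t \<otimes>\<^bsub>T\<^esub> sg_inv T t) \<longleftrightarrow> D x t"
proof -
  obtain a s where as: "a \<in> carrier S" "s \<in> carrier S" "x = cls a" "t = cls s" using x t T_cases by meson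
  have "iv (s \<otimes> iv s) = s \<otimes> iv s" using as by (simp add: iv_mult)
  thus ?thesis using as D_cls by (simp add: Dc_def)
qed

lemma D_fix: assumes x: "x \<in> carrier T" and t: "t \<in> carrier T" and d: "D x t"
  shows "x \<otimes>\<^bsub>T\<^esub> (t \<otimes>\<^bsub>T\<^esub> sg_inv T t) = x"
proof -
  obtain a s where as: "a \<in> carrier S" "s \<in> carrier S" "x = cls a" "t = cls s" using x t T_cases by meson
  have dc: "a \<otimes> (s \<otimes> iv s) = a" using d as D_cls by (simp add: Dc_def)
  show ?thesis using as dc by simp
qed

lemma ivT_c[simp]: "t \<in> carrier T \<Longrightarrow> sg_inv T t \<in> carrier T"
  using T_cases ivT by (metis cls_T iv_cl)

definition G0c where "G0c = {f. (\<forall>x\<in>carrier T. f x \<sim> ex x) \<and> (\<forall>x. x \<notin> carrier T \<longrightarrow> f x = undefined)}"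
definition G0 :: "('a set \<Rightarrow> 'a) monoid" where
  "G0 = \<lparr>carrier = G0c, mult = (\<lambda>f g x. if x \<in> carrier T then f x \<otimes> g x else undefined),
         one = (\<lambda>x. if x \<in> carrier T then ex x else undefined)\<rparr>"

lemma G0_simps[simp]: "carrier G0 = G0c" "f \<otimes>\<^bsub>G0\<^esub> g = (\<lambda>x. if x \<in> carrier T then f x \<otimes> g x else undefined)"
  "\<one>\<^bsub>G0\<^esub> = (\<lambda>x. if x \<in> carrier T then ex x else undefined)"
  by (simp_all add: G0_def)

lemma G0c_D: "f \<in> G0c \<Longrightarrow> x \<in> carrier T \<Longrightarrow> f x \<sim> ex x" by (simp add: G0c_def)
lemma G0c_c[simp]: "f \<in> G0c \<Longrightarrow> x \<in> carrier T \<Longrightarrow> f x \<in> carrier S" using G0c_D rsub by blast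
lemma G0c_u: "f \<in> G0c \<Longrightarrow> x \<notin> carrier T \<Longrightarrow> f x = undefined" by (simp add: G0c_def)
lemma G0cI: "(\<And>x. x \<in> carrier T \<Longrightarrow> f x \<sim> ex x) \<Longrightarrow> (\<And>x. x \<notin> carrier T \<Longrightarrow> f x = undefined) \<Longrightarrow> f \<in> G0c"
  by (simp add: G0c_def)

lemma exl: "f \<in> G0c \<Longrightarrow> x \<in> carrier T \<Longrightarrow> ex x \<otimes> f x = f x"
  using idem_cls(4)[OF G0c_D] by simp
lemma exr: "f \<in> G0c \<Longrightarrow> x \<in> carrier T \<Longrightarrow> f x \<otimes> ex x = f x"
  using idem_cls(3)[OF G0c_D] by simp

lemma G0_group: "group G0"
proof (rule groupI)
  fix f g assume f: "f \<in> carrier G0" and g: "g \<in> carrier G0"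
  show "f \<otimes>\<^bsub>G0\<^esub> g \<in> carrier G0"
  proof (simp, rule G0cI)
    fix x assume x: "x \<in> carrier T"
    have "f x \<otimes> g x \<sim> ex x \<otimes> ex x" using cm2[OF G0c_D[of f x] G0c_D[of g x]] f g x by simp
    thus "(if x \<in> carrier T then f x \<otimes> g x else undefined) \<sim> ex x" using x by simp
  qed simp
next
  show "\<one>\<^bsub>G0\<^esub> \<in> carrier G0" by (auto intro!: G0cI)
next
  fix f g h assume f: "f \<in> carrier G0" and g: "g \<in> carrier G0" and h: "h \<in> carrier G0"
  show "f \<otimes>\<^bsub>G0\<^esub> g \<otimes>\<^bsub>G0\<^esub> h = f \<otimes>\<^bsub>G0\<^esub> (g \<otimes>\<^bsub>G0\<^esub> h)"
    using f g h by (auto simp: fun_eq_iff)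
next
  fix f assume f: "f \<in> carrier G0"
  show "\<one>\<^bsub>G0\<^esub> \<otimes>\<^bsub>G0\<^esub> f = f"
    using f exl G0c_u[of f] by (auto simp: fun_eq_iff)
next
  fix f assume f: "f \<in> carrier G0"
  define g where "g = (\<lambda>x. if x \<in> carrier T then iv (f x) else undefined)"
  have "g \<in> G0c"
  proof (rule G0cI)
    fix x assume x: "x \<in> carrier T"
    have "iv (f x) \<sim> iv (ex x)" using iv_cong G0c_D f x by simp
    thus "g x \<sim> ex x" using x idem_iv[of "ex x"] by (simp add: g_def)
  qed (simp add: g_def)
  moreover have "g \<otimes>\<^bsub>G0\<^esub> f = \<one>\<^bsub>G0\<^esub>"
    using f idem_cls(2)[OF G0c_D] by (auto simp: fun_eq_iff g_def)
  ultimately show "\<exists>g\<in>carrier G0. g \<otimes>\<^bsub>G0\<^esub> f = \<one>\<^bsub>G0\<^esub>" by auto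
qed

definition act where
  "act t f = (\<lambda>x. if x \<in> carrier T then (if D x t then f (x \<otimes>\<^bsub>T\<^esub> t) else ex x) else undefined)"

lemma act_c: assumes t: "t \<in> carrier T" and f: "f \<in> G0c" shows "act t f \<in> G0c"
proof (rule G0cI)
  fix x assume x: "x \<in> carrier T"
  show "act t f x \<sim> ex x"
  proof (cases "D x t")
    case True
    have "f (x \<otimes>\<^bsub>T\<^esub> t) \<sim> ex (x \<otimes>\<^bsub>T\<^esub> t)" using G0c_D f x t by simp
    thus ?thesis using True x t ex_mult by (simp add: act_def)
  qed (use x in \<open>simp add: act_def\<close>)
qed (simp add: act_def)

lemma act_hom: assumes t: "t \<in> carrier T" shows "act t \<in> hom G0 G0"
proof (rule homI)
  fix f assume "f \<in> carrier G0" thus "act t f \<in> carrier G0" using act_c t by simp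
next
  fix f g assume f: "f \<in> carrier G0" and g: "g \<in> carrier G0"
  show "act t (f \<otimes>\<^bsub>G0\<^esub> g) = act t f \<otimes>\<^bsub>G0\<^esub> act t g"
    using t by (auto simp: fun_eq_iff act_def)
qed

lemma act_comp: assumes t: "t \<in> carrier T" and u: "u \<in> carrier T" and f: "f \<in> G0c"
  shows "act t (act u f) = act (t \<otimes>\<^bsub>T\<^esub> u) f"
proof
  fix x show "act t (act u f) x = act (t \<otimes>\<^bsub>T\<^esub> u) f x"
  proof (cases "x \<in> carrier T")
    case x: True
    show ?thesis
      using D_comp[OF x t u] ex_mult[OF x t] assocT[OF x t u] x t u by (auto simp: act_def)
  qed (simp add: act_def)
qed

end



context isc begin

definition F where
  "F s = (\<lambda>x. if x \<in> carrier T then (if D x (cls s) then rep x \<otimes> s \<otimes> iv (rep (x \<otimes>\<^bsub>T\<^esub> cls s)) else ex x) else undefined)"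

lemma F_c: assumes s: "s \<in> carrier S" shows "F s \<in> G0c"
proof (rule G0cI)
  fix x assume x: "x \<in> carrier T"
  show "F s x \<sim> ex x"
  proof (cases "D x (cls s)")
    case True
    define a where "a = rep x"
    have a: "a \<in> carrier S" "x = cls a" using x by (auto simp: a_def)
    have dc: "a \<otimes> (s \<otimes> iv s) = a" using True a s D_cls by (simp add: Dc_def)
    have r: "rep (x \<otimes>\<^bsub>T\<^esub> cls s) \<sim> a \<otimes> s" using a s rep_cls by simp
    have "a \<otimes> s \<otimes> iv (rep (x \<otimes>\<^bsub>T\<^esub> cls s)) \<sim> a \<otimes> s \<otimes> iv (a \<otimes> s)"
      using cm2[OF rrefl[of "a \<otimes> s"] iv_cong[OF r]] a s by simp
    also have "a \<otimes> s \<otimes> iv (a \<otimes> s) = (a \<otimes> (s \<otimes> iv s)) \<otimes> iv a" using a s by (simp add: iv_mult)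
    also have "\<dots> = ex x" using dc by (simp add: ex_def a_def)
    finally show ?thesis using True x by (simp add: F_def a_def)
  qed (use x in \<open>simp add: F_def\<close>)
qed (simp add: F_def)

lemma F_fix: assumes s: "s \<in> carrier S"
  shows "act (cls s \<otimes>\<^bsub>T\<^esub> sg_inv T (cls s)) (F s) = F s"
proof
  fix x show "act (cls s \<otimes>\<^bsub>T\<^esub> sg_inv T (cls s)) (F s) x = F s x"
  proof (cases "x \<in> carrier T")
    case x: True
    show ?thesis using D_idem[OF x cls_T[OF s]] D_fix[OF x cls_T[OF s]] x s
      by (auto simp: act_def F_def simp del: ivT multT)
  qed (simp add: act_def F_def)
qed

lemma F_mult: assumes s: "s \<in> carrier S" and v: "v \<in> carrier S"
  shows "F (s \<otimes> v) = act ((cls s \<otimes>\<^bsub>T\<^esub> cls v) \<otimes>\<^bsub>T\<^esub> sg_inv T (cls s \<otimes>\<^bsub>T\<^esub> cls v)) (F s)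
     \<otimes>\<^bsub>G0\<^esub> act (cls s) (F v)"
proof
  fix x
  define k where "k = (cls s \<otimes>\<^bsub>T\<^esub> cls v) \<otimes>\<^bsub>T\<^esub> sg_inv T (cls s \<otimes>\<^bsub>T\<^esub> cls v)"
  have csv: "cls s \<otimes>\<^bsub>T\<^esub> cls v = cls (s \<otimes> v)" using s v by simp
  show "F (s \<otimes> v) x = (act k (F s) \<otimes>\<^bsub>G0\<^esub> act (cls s) (F v)) x"
  proof (cases "x \<in> carrier T")
    case x: True
    have st: "cls s \<in> carrier T" "cls v \<in> carrier T" "cls (s \<otimes> v) \<in> carrier T" using s v by auto
    have Dk: "D x k \<longleftrightarrow> D x (cls (s \<otimes> v))" unfolding k_def csv using D_idem[OF x st(3)] .
    have comp: "(D x (cls s) \<and> D (x \<otimes>\<^bsub>T\<^esub> cls s) (cls v)) \<longleftrightarrow> D x (cls (s \<otimes> v))"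
      using D_comp[OF x st(1) st(2)] csv by simp
    show ?thesis
    proof (cases "D x (cls (s \<otimes> v))")
      case True
      hence d1: "D x (cls s)" and d2: "D (x \<otimes>\<^bsub>T\<^esub> cls s) (cls v)" using comp by auto
      have xk: "x \<otimes>\<^bsub>T\<^esub> k = x" unfolding k_def csv using D_fix[OF x st(3) True] .
      define a where "a = rep x"
      have a: "a \<in> carrier S" "x = cls a" using x by (auto simp: a_def)
      define r where "r = rep (x \<otimes>\<^bsub>T\<^esub> cls s)"
      have r: "r \<sim> a \<otimes> s" using a s rep_cls by (simp add: r_def)
      have rc: "r \<in> carrier S" using r rsub by blast
      have rr: "iv r \<otimes> r = iv (a \<otimes> s) \<otimes> (a \<otimes> s)" using rho_idem(2)[OF r] .
      have q: "rep (x \<otimes>\<^bsub>T\<^esub> cls s \<otimes>\<^bsub>T\<^esub> cls v) = rep (x \<otimes>\<^bsub>T\<^esub> cls (s \<otimes> v))"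
        using assocT[OF x st(1) st(2)] csv by simp
      have qc: "rep (x \<otimes>\<^bsub>T\<^esub> cls (s \<otimes> v)) \<in> carrier S" using x st by simp
      have lhs: "F (s \<otimes> v) x = a \<otimes> (s \<otimes> v) \<otimes> iv (rep (x \<otimes>\<^bsub>T\<^esub> cls (s \<otimes> v)))"
        using True x by (simp add: F_def a_def)
      have rhs1: "act k (F s) x = a \<otimes> s \<otimes> iv r"
        using x Dk True xk d1 by (simp add: act_def F_def a_def r_def)
      have rhs2: "act (cls s) (F v) x = r \<otimes> v \<otimes> iv (rep (x \<otimes>\<^bsub>T\<^esub> cls (s \<otimes> v)))"
        using x d1 d2 q st by (simp add: act_def F_def r_def)
      have "(a \<otimes> s \<otimes> iv r) \<otimes> (r \<otimes> v \<otimes> iv (rep (x \<otimes>\<^bsub>T\<^esub> cls (s \<otimes> v))))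
          = (a \<otimes> s) \<otimes> ((iv r \<otimes> r) \<otimes> (v \<otimes> iv (rep (x \<otimes>\<^bsub>T\<^esub> cls (s \<otimes> v)))))"
        using a s v rc qc by simp
      also have "\<dots> = (a \<otimes> s) \<otimes> ((iv (a \<otimes> s) \<otimes> (a \<otimes> s)) \<otimes> (v \<otimes> iv (rep (x \<otimes>\<^bsub>T\<^esub> cls (s \<otimes> v)))))"
        using rr by simp
      also have "\<dots> = a \<otimes> (s \<otimes> v) \<otimes> iv (rep (x \<otimes>\<^bsub>T\<^esub> cls (s \<otimes> v)))"
        using a s v qc iv1'[of "a \<otimes> s" "v \<otimes> iv (rep (x \<otimes>\<^bsub>T\<^esub> cls (s \<otimes> v)))"] by (simp del: iv1')
      finally show ?thesis using lhs rhs1 rhs2 x by simp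
    next
      case False
      have lhs: "F (s \<otimes> v) x = ex x" using False x by (simp add: F_def)
      have rhs1: "act k (F s) x = ex x" using x Dk False by (simp add: act_def)
      have rhs2: "act (cls s) (F v) x = ex x"
      proof (cases "D x (cls s)")
        case True
        hence "\<not> D (x \<otimes>\<^bsub>T\<^esub> cls s) (cls v)" using comp False by blast
        thus ?thesis using True x st ex_mult[OF x st(1) True] by (simp add: act_def F_def)
      qed (use x in \<open>simp add: act_def\<close>)
      show ?thesis using lhs rhs1 rhs2 x by simp
    qed
  qed (simp add: act_def F_def)
qed

lemma F_inj: assumes s: "s \<in> carrier S" and s2: "s2 \<in> carrier S" and c: "cls s = cls s2" and f: "F s = F s2"
  shows "s = s2"
proof -
  have ss: "s \<sim> s2" using c cls_eq s s2 by blast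
  define x where "x = cls (s \<otimes> iv s)"
  have x: "x \<in> carrier T" using s by (simp add: x_def)
  define a where "a = rep x"
  have a: "a \<sim> s \<otimes> iv s" using rep_cls s by (simp add: a_def x_def)
  have ac: "a \<in> carrier S" using a rsub by blast
  have aa: "iv a \<otimes> a = s \<otimes> iv s" using idem_cls(2)[OF a] s by simp
  have e2: "s \<otimes> iv s = s2 \<otimes> iv s2" using rho_idem(1)[OF ss] .
  have xs: "x \<otimes>\<^bsub>T\<^esub> cls s = cls s" using s by (simp add: x_def)
  have d: "D x (cls s)" using s D_cls by (simp add: x_def Dc_def)
  define q where "q = rep (cls s)"
  have q: "q \<sim> s" using rep_cls s by (simp add: q_def)
  have qc: "q \<in> carrier S" using q rsub by blast
  have qq: "iv q \<otimes> q = iv s \<otimes> s" using rho_idem(2)[OF q] .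
  have qq2: "iv q \<otimes> q = iv s2 \<otimes> s2" using rho_idem(2)[OF rtrans[OF q ss]] .
  have "F s x = a \<otimes> s \<otimes> iv q" using d x xs by (simp add: F_def a_def q_def)
  moreover have "F s2 x = a \<otimes> s2 \<otimes> iv q" using d x xs c by (simp add: F_def a_def q_def)
  ultimately have eq: "a \<otimes> s \<otimes> iv q = a \<otimes> s2 \<otimes> iv q" using f by simp
  have "s = (iv a \<otimes> a) \<otimes> s \<otimes> (iv q \<otimes> q)" using aa qq s by simp
  also have "\<dots> = iv a \<otimes> (a \<otimes> s \<otimes> iv q) \<otimes> q" using ac s qc by simp
  also have "\<dots> = iv a \<otimes> (a \<otimes> s2 \<otimes> iv q) \<otimes> q" using eq by simp
  also have "\<dots> = (iv a \<otimes> a) \<otimes> s2 \<otimes> (iv q \<otimes> q)" using ac s2 qc by simp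
  also have "\<dots> = s2" using aa qq2 e2 s2 by simp
  finally show ?thesis .
qed

end



context isc begin

definition enc :: "('a set \<Rightarrow> 'a) \<Rightarrow> 'a set list" where
  "enc f = [(\<lambda>x. f x \<otimes> rep x) ` carrier T]"

lemma enc_mem: assumes f: "f \<in> G0c" and x: "x \<in> carrier T" shows "f x \<otimes> rep x \<in> x"
proof -
  have "f x \<otimes> rep x \<sim> ex x \<otimes> rep x" using cmr[OF G0c_D[OF f x]] x by simp
  also have "ex x \<otimes> rep x = rep x" using x by (simp add: ex_def)
  finally have "rep x \<sim> f x \<otimes> rep x" by (rule rsym)
  hence "f x \<otimes> rep x \<in> cls (rep x)" by (simp add: mem_cls)
  thus ?thesis using x by simp
qed

lemma cls_disj: assumes x: "x \<in> carrier T" and y: "y \<in> carrier T" and z: "z \<in> x" "z \<in> y" shows "x = y"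
proof -
  obtain a b where ab: "a \<in> carrier S" "b \<in> carrier S" "x = cls a" "y = cls b" using x y T_cases by meson
  have "a \<sim> z" "b \<sim> z" using z ab mem_cls by auto
  hence "a \<sim> b" using rsym rtrans by blast
  thus ?thesis using ab cls_eq by simp
qed

lemma enc_inj: "inj_on enc G0c"
proof (rule inj_onI)
  fix f g assume f: "f \<in> G0c" and g: "g \<in> G0c" and e: "enc f = enc g"
  hence im: "(\<lambda>x. f x \<otimes> rep x) ` carrier T = (\<lambda>x. g x \<otimes> rep x) ` carrier T" by (simp add: enc_def)
  show "f = g"
  proof
    fix x show "f x = g x"
    proof (cases "x \<in> carrier T")
      case x: True
      have "f x \<otimes> rep x \<in> (\<lambda>x. g x \<otimes> rep x) ` carrier T" using im x by blast
      then obtain y where y: "y \<in> carrier T" "f x \<otimes> rep x = g y \<otimes> rep y" by blast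
      have "x = y" using cls_disj[OF x y(1) enc_mem[OF f x]] enc_mem[OF g y(1)] y by simp
      hence fg: "f x \<otimes> rep x = g x \<otimes> rep x" using y by simp
      have "f x = (f x \<otimes> rep x) \<otimes> iv (rep x)" using exr[OF f x] f x by (simp add: ex_def)
      also have "\<dots> = (g x \<otimes> rep x) \<otimes> iv (rep x)" using fg by simp
      also have "\<dots> = g x" using exr[OF g x] g x by (simp add: ex_def)
      finally show ?thesis .
    qed (simp add: G0c_u[OF f] G0c_u[OF g])
  qed
qed

definition dec where "dec = inv_into G0c enc"
lemma dec_enc[simp]: "f \<in> G0c \<Longrightarrow> dec (enc f) = f" unfolding dec_def using enc_inj by (simp add: inv_into_f_f)

definition GG :: "'a set list monoid" where
  "GG = \<lparr>carrier = enc ` G0c, mult = (\<lambda>p q. enc (dec p \<otimes>\<^bsub>G0\<^esub> dec q)), one = enc \<one>\<^bsub>G0\<^esub>\<rparr>"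

lemma GG_simps[simp]: "carrier GG = enc ` G0c" "p \<otimes>\<^bsub>GG\<^esub> q = enc (dec p \<otimes>\<^bsub>G0\<^esub> dec q)" "\<one>\<^bsub>GG\<^esub> = enc \<one>\<^bsub>G0\<^esub>"
  by (simp_all add: GG_def)

lemma GG_group: "group GG"
proof -
  interpret g0: group G0 by (rule G0_group)
  show ?thesis
  proof (rule groupI)
    fix p q assume "p \<in> carrier GG" "q \<in> carrier GG"
    thus "p \<otimes>\<^bsub>GG\<^esub> q \<in> carrier GG" using g0.m_closed by (auto simp del: G0_simps(2,3))
  next
    show "\<one>\<^bsub>GG\<^esub> \<in> carrier GG" using g0.one_closed by (auto simp del: G0_simps(2,3))
  next
    fix p q r assume "p \<in> carrier GG" "q \<in> carrier GG" "r \<in> carrier GG"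
    thus "p \<otimes>\<^bsub>GG\<^esub> q \<otimes>\<^bsub>GG\<^esub> r = p \<otimes>\<^bsub>GG\<^esub> (q \<otimes>\<^bsub>GG\<^esub> r)" using g0.m_closed g0.m_assoc by (auto simp del: G0_simps(2,3))
  next
    fix p assume "p \<in> carrier GG"
    thus "\<one>\<^bsub>GG\<^esub> \<otimes>\<^bsub>GG\<^esub> p = p" using g0.one_closed by (auto simp del: G0_simps(2,3))
  next
    fix p assume "p \<in> carrier GG"
    then obtain f where f: "f \<in> G0c" "p = enc f" by auto
    then obtain g where g: "g \<in> G0c" "g \<otimes>\<^bsub>G0\<^esub> f = \<one>\<^bsub>G0\<^esub>" using g0.l_inv_ex[of f] by auto
    have "enc g \<otimes>\<^bsub>GG\<^esub> p = \<one>\<^bsub>GG\<^esub>" using f g by (simp del: G0_simps(2,3))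
    moreover have "enc g \<in> carrier GG" using g by simp
    ultimately show "\<exists>q\<in>carrier GG. q \<otimes>\<^bsub>GG\<^esub> p = \<one>\<^bsub>GG\<^esub>" by blast
  qed
qed

definition act' where "act' t p = enc (act t (dec p))"
definition psi where "psi s = (enc (F s), cls s)"

lemma main: "group GG \<and> acts_by_endos T GG act' \<and>
   psi \<in> hom S (lambda_sdp GG T act') \<and> inj_on psi (carrier S) \<and>
   \<rho> = {(x, y). x \<in> carrier S \<and> y \<in> carrier S \<and> snd (psi x) = snd (psi y)}"
proof (intro conjI)
  interpret g0: group G0 by (rule G0_group)
  show "group GG" by (rule GG_group)
  show "acts_by_endos T GG act'"
    unfolding acts_by_endos_def
  proof (intro conjI ballI)
    fix t assume t: "t \<in> carrier T"
    show "act' t \<in> hom GG GG"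
    proof (rule homI)
      fix p assume "p \<in> carrier GG"
      thus "act' t p \<in> carrier GG" using act_c t by (auto simp: act'_def)
    next
      fix p q assume "p \<in> carrier GG" "q \<in> carrier GG"
      then obtain f g where fg: "f \<in> G0c" "g \<in> G0c" "p = enc f" "q = enc g" by auto
      have "act t (f \<otimes>\<^bsub>G0\<^esub> g) = act t f \<otimes>\<^bsub>G0\<^esub> act t g"
        using hom_mult[OF act_hom[OF t], of f g] fg by simp
      thus "act' t (p \<otimes>\<^bsub>GG\<^esub> q) = act' t p \<otimes>\<^bsub>GG\<^esub> act' t q"
        using fg g0.m_closed[of f g] act_c[OF t] by (simp add: act'_def del: G0_simps(2))
    qed
  next
    fix t u p assume t: "t \<in> carrier T" and u: "u \<in> carrier T" and p: "p \<in> carrier GG"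
    then obtain f where f: "f \<in> G0c" "p = enc f" by auto
    show "act' t (act' u p) = act' (t \<otimes>\<^bsub>T\<^esub> u) p"
      using f act_c[OF u f(1)] act_comp[OF t u f(1)] by (simp add: act'_def)
  qed
  show "psi \<in> hom S (lambda_sdp GG T act')"
  proof (rule homI)
    fix s assume s: "s \<in> carrier S"
    show "psi s \<in> carrier (lambda_sdp GG T act')"
      using s F_c[OF s] F_fix[OF s] by (simp add: lambda_sdp_def psi_def act'_def del: ivT multT)
  next
    fix s v assume s: "s \<in> carrier S" and v: "v \<in> carrier S"
    have k: "(cls s \<otimes>\<^bsub>T\<^esub> cls v) \<otimes>\<^bsub>T\<^esub> sg_inv T (cls s \<otimes>\<^bsub>T\<^esub> cls v) \<in> carrier T" using s v by simp
    show "psi (s \<otimes> v) = psi s \<otimes>\<^bsub>lambda_sdp GG T act'\<^esub> psi v"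
      using F_mult[OF s v] multT[OF s v] s v act_c[OF k F_c[OF s]] act_c[OF cls_T[OF s] F_c[OF v]] F_c
      by (simp add: lambda_sdp_def psi_def act'_def del: ivT multT G0_simps(2))
  qed
  show "inj_on psi (carrier S)"
  proof (rule inj_onI)
    fix s s2 assume s: "s \<in> carrier S" and s2: "s2 \<in> carrier S" and e: "psi s = psi s2"
    have "enc (F s) = enc (F s2)" "cls s = cls s2" using e by (auto simp: psi_def)
    hence "F s = F s2" using enc_inj F_c s s2 by (meson inj_onD)
    thus "s = s2" using F_inj s s2 \<open>cls s = cls s2\<close> by blast
  qed
  show "\<rho> = {(x, y). x \<in> carrier S \<and> y \<in> carrier S \<and> snd (psi x) = snd (psi y)}"
    using cls_eq rsub by (auto simp: psi_def req_def)
qed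

end

theorem corollary3p3:
  fixes S :: "('a, 'b) monoid_scheme" and \<rho> :: "('a \<times> 'a) set"
  assumes "inverse_semigroup S" and "sg_congruence S \<rho>" and "idempotent_separating S \<rho>"
  shows "\<exists>(G :: 'a set list monoid) (act :: 'a set \<Rightarrow> 'a set list \<Rightarrow> 'a set list)
            (\<psi> :: 'a \<Rightarrow> 'a set list \<times> 'a set).
           group G \<and> acts_by_endos (sg_quot S \<rho>) G act \<and>
           \<psi> \<in> hom S (lambda_sdp G (sg_quot S \<rho>) act) \<and> inj_on \<psi> (carrier S) \<and>
           \<rho> = {(x, y). x \<in> carrier S \<and> y \<in> carrier S \<and> snd (\<psi> x) = snd (\<psi> y)}"
proof -
  interpret isc S \<rho> using assms by (unfold_locales) auto
  show ?thesis using main by blast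
qed



end
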